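(* A finite simple graph $G$ is a linear forest (a disjoint union of paths) if and only if it admits an $LF$-free circular ordering.
   Context: A circular ordering of a finite set is obtained by placing its elements at distinct points of a circle. A circularly ordered graph is a graph with a circular ordering of its vertices; isomorphism means a graph isomorphism preserving circular orderings; induced circularly ordered subgraphs are induced subgraphs with the restricted ordering. A circular ordering $C$ of $V(G)$ is $LF$-free if no induced circularly ordered subgraph of $(G,C)$ is isomorphic to a member of $LF$. $LF$ consists of the following circularly ordered graphs (vertices $v_1,v_2,\dots$ clockwise in this order; the listed edges are all edges): the triangle on $v_1,v_2,v_3$; on $v_1,\dots,v_4$: edges $v_1v_2,v_2v_3,v_3v_4,v_4v_1$ (simple $C_4$); edges $v_1v_2,v_2v_4,v_4v_3,v_3v_1$ (the other circular ordering of $C_4$); edges $v_1v_2,v_2v_3,v_3v_4$ (simple $P_4$); edges $v_3v_1,v_1v_4,v_4v_2$ (crossed $P_4$); edges $v_3v_1,v_3v_2,v_3v_4$ (the claw). *)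

theory Defs
  imports Main
begin

definition simple_graph :: "'a set \<Rightarrow> ('a \<Rightarrow> 'a \<Rightarrow> bool) \<Rightarrow> bool" where
  "simple_graph V E \<longleftrightarrow> finite V \<and> (\<forall>x y. E x y \<longrightarrow> x \<in> V \<and> y \<in> V)
     \<and> (\<forall>x y. E x y \<longrightarrow> E y x) \<and> (\<forall>x. \<not> E x x)"

definition induces_path :: "('a \<Rightarrow> 'a \<Rightarrow> bool) \<Rightarrow> 'a set \<Rightarrow> bool" where
  "induces_path E S \<longleftrightarrow> (\<exists>p. distinct p \<and> set p = S \<and>
     (\<forall>x\<in>S. \<forall>y\<in>S. E x y \<longleftrightarrow> (\<exists>i. Suc i < length p \<and> {p ! i, p ! Suc i} = {x, y})))"

definition component :: "('a \<Rightarrow> 'a \<Rightarrow> bool) \<Rightarrow> 'a \<Rightarrow> 'a set" where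
  "component E x = {y. E\<^sup>*\<^sup>* x y}"

definition linear_forest :: "'a set \<Rightarrow> ('a \<Rightarrow> 'a \<Rightarrow> bool) \<Rightarrow> bool" where
  "linear_forest V E \<longleftrightarrow> (\<forall>x\<in>V. induces_path E (component E x))"

(* A circular ordering of V is represented by a numbering pos : V -> {0..<|V|}
   read clockwise around the circle (the cut point is irrelevant since all
   notions below are rotation invariant). *)
definition circ_ordering :: "'a set \<Rightarrow> ('a \<Rightarrow> nat) \<Rightarrow> bool" where
  "circ_ordering V pos \<longleftrightarrow> bij_betw pos V {0..<card V}"

definition clockwise :: "('a \<Rightarrow> nat) \<Rightarrow> 'a list \<Rightarrow> bool" where
  "clockwise pos us \<longleftrightarrow>
     (\<exists>j\<le>length us. sorted_wrt (<) (map pos (drop j us @ take j us)))"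

(* A circularly ordered pattern: k vertices v_0,...,v_{k-1} clockwise,
   F the (undirected) edge set on indices. *)
type_synonym pattern = "nat \<times> (nat \<times> nat) set"

definition pat_adj :: "(nat \<times> nat) set \<Rightarrow> nat \<Rightarrow> nat \<Rightarrow> bool" where
  "pat_adj F i j \<longleftrightarrow> (i, j) \<in> F \<or> (j, i) \<in> F"

definition contains_pattern ::
  "'a set \<Rightarrow> ('a \<Rightarrow> 'a \<Rightarrow> bool) \<Rightarrow> ('a \<Rightarrow> nat) \<Rightarrow> pattern \<Rightarrow> bool" where
  "contains_pattern V E pos P \<longleftrightarrow> (\<exists>us. length us = fst P \<and> distinct us \<and> set us \<subseteq> V \<and>
     clockwise pos us \<and>
     (\<forall>i<fst P. \<forall>j<fst P. i \<noteq> j \<longrightarrow> (E (us ! i) (us ! j) \<longleftrightarrow> pat_adj (snd P) i j)))"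

(* The family LF (indices 0-based: v_1 = 0, v_2 = 1, ...) *)
definition LF :: "pattern set" where
  "LF = {(3, {(0,1),(1,2),(2,0)}),          \<comment> \<open>triangle\<close>
         (4, {(0,1),(1,2),(2,3),(3,0)}),    \<comment> \<open>simple C4\<close>
         (4, {(0,1),(1,3),(3,2),(2,0)}),    \<comment> \<open>other circular ordering of C4\<close>
         (4, {(0,1),(1,2),(2,3)}),          \<comment> \<open>simple P4\<close>
         (4, {(2,0),(0,3),(3,1)}),          \<comment> \<open>crossed P4\<close>
         (4, {(2,0),(2,1),(2,3)})}"

definition LF_free :: "'a set \<Rightarrow> ('a \<Rightarrow> 'a \<Rightarrow> bool) \<Rightarrow> ('a \<Rightarrow> nat) \<Rightarrow> bool" where
  "LF_free V E pos \<longleftrightarrow> (\<forall>P\<in>LF. \<not> contains_pattern V E pos P)"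

end

theory Submission
  imports Defs
begin

definition cyc4 :: "nat \<Rightarrow> nat \<Rightarrow> nat \<Rightarrow> nat \<Rightarrow> bool" where
 "cyc4 w x y z \<longleftrightarrow> (\<exists>j\<le>4. sorted_wrt (<) (drop j [w,x,y,z] @ take j [w,x,y,z]))"
definition cyc3 :: "nat \<Rightarrow> nat \<Rightarrow> nat \<Rightarrow> bool" where
 "cyc3 x y z \<longleftrightarrow> (\<exists>j\<le>3. sorted_wrt (<) (drop j [x,y,z] @ take j [x,y,z]))"
lemma ex_le4: "(\<exists>j\<le>(4::nat). Q j) \<longleftrightarrow> Q 0 \<or> Q 1 \<or> Q 2 \<or> Q 3 \<or> Q 4"
proof
  assume "\<exists>j\<le>(4::nat). Q j"
  then obtain j where "j \<le> 4" "Q j" by blast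
  moreover have "j = 0 \<or> j = 1 \<or> j = 2 \<or> j = 3 \<or> j = 4" using \<open>j \<le> 4\<close> by arith
  ultimately show "Q 0 \<or> Q 1 \<or> Q 2 \<or> Q 3 \<or> Q 4" by blast
next
  assume "Q 0 \<or> Q 1 \<or> Q 2 \<or> Q 3 \<or> Q 4"
  moreover have "(0::nat)\<le>4" "(1::nat)\<le>4" "(2::nat)\<le>4" "(3::nat)\<le>4" "(4::nat)\<le>4" by auto
  ultimately show "\<exists>j\<le>(4::nat). Q j" by blast
qed
lemma ex_le3: "(\<exists>j\<le>(3::nat). Q j) \<longleftrightarrow> Q 0 \<or> Q 1 \<or> Q 2 \<or> Q 3"
proof
  assume "\<exists>j\<le>(3::nat). Q j"
  then obtain j where "j \<le> 3" "Q j" by blast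
  moreover have "j = 0 \<or> j = 1 \<or> j = 2 \<or> j = 3" using \<open>j \<le> 3\<close> by arith
  ultimately show "Q 0 \<or> Q 1 \<or> Q 2 \<or> Q 3" by blast
next
  assume "Q 0 \<or> Q 1 \<or> Q 2 \<or> Q 3"
  moreover have "(0::nat)\<le>3" "(1::nat)\<le>3" "(2::nat)\<le>3" "(3::nat)\<le>3" by auto
  ultimately show "\<exists>j\<le>(3::nat). Q j" by blast
qed
lemma clockwise4: "clockwise pos [a,b,c,d] \<longleftrightarrow> cyc4 (pos a) (pos b) (pos c) (pos d)"
proof -
  have l: "length [a,b,c,d] = 4" by simp
  show ?thesis unfolding clockwise_def l cyc4_def
    by (simp only: map_append drop_map[symmetric] take_map[symmetric] list.map)
qed
lemma clockwise3: "clockwise pos [a,b,c] \<longleftrightarrow> cyc3 (pos a) (pos b) (pos c)"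
proof -
  have l: "length [a,b,c] = 3" by simp
  show ?thesis unfolding clockwise_def l cyc3_def
    by (simp only: map_append drop_map[symmetric] take_map[symmetric] list.map)
qed

lemma cyc4_expand: "cyc4 w x y z \<longleftrightarrow>
  (w<x \<and> w<y \<and> w<z \<and> x<y \<and> x<z \<and> y<z) \<or> (x<y \<and> x<z \<and> x<w \<and> y<z \<and> y<w \<and> z<w) \<or>
  (y<z \<and> y<w \<and> y<x \<and> z<w \<and> z<x \<and> w<x) \<or> (z<w \<and> z<x \<and> z<y \<and> w<x \<and> w<y \<and> x<y)"
  unfolding cyc4_def ex_le4 by (simp add: numeral_eq_Suc One_nat_def; blast?)
lemma cyc3_expand: "cyc3 x y z \<longleftrightarrow> (x<y \<and> x<z \<and> y<z) \<or> (y<z \<and> y<x \<and> z<x) \<or> (z<x \<and> z<y \<and> x<y)"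
  unfolding cyc3_def ex_le3 by (simp add: numeral_eq_Suc One_nat_def; blast?)

definition btw3 :: "nat \<Rightarrow> nat \<Rightarrow> nat \<Rightarrow> bool" where
 "btw3 a x b \<longleftrightarrow> (a < x \<and> x < b) \<or> (b < a \<and> a < x) \<or> (x < b \<and> b < a)"

lemma nless: "(y::nat) < x \<Longrightarrow> (x < y) \<longleftrightarrow> False" by simp

lemma arr_claw: assumes "distinct [x,a,b,c::nat]"
  shows "cyc4 b c x a \<or> cyc4 c b x a \<or> cyc4 a c x b \<or> cyc4 c a x b \<or> cyc4 a b x c \<or> cyc4 b a x c"
proof -
  from assms have "(x<a \<and> \<not> a<x) \<or> (a<x \<and> \<not> x<a)" "(x<b \<and> \<not> b<x) \<or> (b<x \<and> \<not> x<b)" "(x<c \<and> \<not> c<x) \<or> (c<x \<and> \<not> x<c)" "(a<b \<and> \<not> b<a) \<or> (b<a \<and> \<not> a<b)" "(a<c \<and> \<not> c<a) \<or> (c<a \<and> \<not> a<c)" "(b<c \<and> \<not> c<b) \<or> (c<b \<and> \<not> b<c)" by auto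
  then show ?thesis unfolding cyc4_expand by (elim disjE conjE; ((rule FalseE, linarith) | simp only: simp_thms))
qed
lemma arr_c4: assumes "distinct [a,b,c,d::nat]"
  shows "cyc4 a b c d \<or> cyc4 a d c b \<or> cyc4 a b d c \<or> cyc4 c d b a \<or> cyc4 c b d a \<or> cyc4 a d b c"
proof -
  from assms have "(a<b \<and> \<not> b<a) \<or> (b<a \<and> \<not> a<b)" "(a<c \<and> \<not> c<a) \<or> (c<a \<and> \<not> a<c)" "(a<d \<and> \<not> d<a) \<or> (d<a \<and> \<not> a<d)" "(b<c \<and> \<not> c<b) \<or> (c<b \<and> \<not> b<c)" "(b<d \<and> \<not> d<b) \<or> (d<b \<and> \<not> b<d)" "(c<d \<and> \<not> d<c) \<or> (d<c \<and> \<not> c<d)" by auto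
  then show ?thesis unfolding cyc4_expand by (elim disjE conjE; ((rule FalseE, linarith) | simp only: simp_thms))
qed
lemma arr_p4: assumes "distinct [a,b,c,d::nat]" "(btw3 b a c \<longleftrightarrow> btw3 b d c)"
  shows "cyc4 a b c d \<or> cyc4 d c b a \<or> cyc4 b d a c \<or> cyc4 c a d b"
proof -
  from assms have "(a<b \<and> \<not> b<a) \<or> (b<a \<and> \<not> a<b)" "(a<c \<and> \<not> c<a) \<or> (c<a \<and> \<not> a<c)" "(a<d \<and> \<not> d<a) \<or> (d<a \<and> \<not> a<d)" "(b<c \<and> \<not> c<b) \<or> (c<b \<and> \<not> b<c)" "(b<d \<and> \<not> d<b) \<or> (d<b \<and> \<not> b<d)" "(c<d \<and> \<not> d<c) \<or> (d<c \<and> \<not> c<d)" by auto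
  then show ?thesis using assms(2) unfolding cyc4_expand btw3_def by (elim disjE conjE; ((rule FalseE, linarith) | simp only: simp_thms))
qed
lemma arr_3: assumes "distinct [a,b,c::nat]" shows "cyc3 a b c \<or> cyc3 a c b"
proof -
  from assms have "(a<b \<and> \<not> b<a) \<or> (b<a \<and> \<not> a<b)" "(a<c \<and> \<not> c<a) \<or> (c<a \<and> \<not> a<c)" "(b<c \<and> \<not> c<b) \<or> (c<b \<and> \<not> b<c)" by auto
  then show ?thesis unfolding cyc3_expand by (elim disjE conjE; ((rule FalseE, linarith) | simp only: simp_thms))
qed
lemma sp4_bad: assumes "cyc4 a b c d" shows "\<not> btw3 b a c \<and> \<not> btw3 b d c"
proof -
  from assms have "distinct [a,b,c,d]" unfolding cyc4_expand by auto
  then have "(a<b \<and> \<not> b<a) \<or> (b<a \<and> \<not> a<b)" "(a<c \<and> \<not> c<a) \<or> (c<a \<and> \<not> a<c)" "(a<d \<and> \<not> d<a) \<or> (d<a \<and> \<not> a<d)" "(b<c \<and> \<not> c<b) \<or> (c<b \<and> \<not> b<c)" "(b<d \<and> \<not> d<b) \<or> (d<b \<and> \<not> b<d)" "(c<d \<and> \<not> d<c) \<or> (d<c \<and> \<not> c<d)" by auto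
  then show ?thesis using assms unfolding cyc4_expand btw3_def by (elim disjE conjE; ((rule FalseE, linarith) | simp only: simp_thms))
qed
lemma cp4_bad: assumes "cyc4 a b c d" shows "btw3 a c d \<and> btw3 a b d"
proof -
  from assms have "distinct [a,b,c,d]" unfolding cyc4_expand by auto
  then have "(a<b \<and> \<not> b<a) \<or> (b<a \<and> \<not> a<b)" "(a<c \<and> \<not> c<a) \<or> (c<a \<and> \<not> a<c)" "(a<d \<and> \<not> d<a) \<or> (d<a \<and> \<not> a<d)" "(b<c \<and> \<not> c<b) \<or> (c<b \<and> \<not> b<c)" "(b<d \<and> \<not> d<b) \<or> (d<b \<and> \<not> b<d)" "(c<d \<and> \<not> d<c) \<or> (d<c \<and> \<not> c<d)" by auto
  then show ?thesis using assms unfolding cyc4_expand btw3_def by (elim disjE conjE; ((rule FalseE, linarith) | simp only: simp_thms))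
qed

lemma all_less4: "(\<forall>i<(4::nat). P i) \<longleftrightarrow> P 0 \<and> P 1 \<and> P 2 \<and> P 3"
proof
  assume "\<forall>i<(4::nat). P i" then show "P 0 \<and> P 1 \<and> P 2 \<and> P 3" by simp
next
  assume H: "P 0 \<and> P 1 \<and> P 2 \<and> P 3"
  show "\<forall>i<(4::nat). P i"
  proof (intro allI impI)
    fix i :: nat assume "i < 4" then have "i = 0 \<or> i = 1 \<or> i = 2 \<or> i = 3" by arith
    then show "P i" using H by blast
  qed
qed
lemma all_less3: "(\<forall>i<(3::nat). P i) \<longleftrightarrow> P 0 \<and> P 1 \<and> P 2"
proof
  assume "\<forall>i<(3::nat). P i" then show "P 0 \<and> P 1 \<and> P 2" by simp
next
  assume H: "P 0 \<and> P 1 \<and> P 2"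
  show "\<forall>i<(3::nat). P i"
  proof (intro allI impI)
    fix i :: nat assume "i < 3" then have "i = 0 \<or> i = 1 \<or> i = 2" by arith
    then show "P i" using H by blast
  qed
qed
lemma len4: "length us = 4 \<Longrightarrow> \<exists>a b c d. us = [a,b,c,d]"
  by (cases us; cases "tl us"; cases "tl (tl us)"; cases "tl (tl (tl us))"; auto simp: eval_nat_numeral)
lemma len3: "length us = 3 \<Longrightarrow> \<exists>a b c. us = [a,b,c]"
  by (cases us; cases "tl us"; cases "tl (tl us)"; auto simp: eval_nat_numeral)
lemma contains4: "contains_pattern V E pos (4,F) \<longleftrightarrow> (\<exists>a b c d. distinct [a,b,c,d] \<and> a\<in>V \<and> b\<in>V \<and> c\<in>V \<and> d\<in>V
   \<and> cyc4 (pos a) (pos b) (pos c) (pos d) \<and>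
   (\<forall>i<4. \<forall>j<4. i \<noteq> j \<longrightarrow> (E ([a,b,c,d]!i) ([a,b,c,d]!j) \<longleftrightarrow> pat_adj F i j)))"
  (is "?L \<longleftrightarrow> ?R")
proof
  assume ?L
  then obtain us where us: "length us = 4" "distinct us" "set us \<subseteq> V" "clockwise pos us"
    "\<forall>i<4. \<forall>j<4. i \<noteq> j \<longrightarrow> (E (us!i) (us!j) \<longleftrightarrow> pat_adj F i j)"
    unfolding contains_pattern_def by auto
  from len4[OF us(1)] obtain a b c d where "us = [a,b,c,d]" by blast
  with us show ?R by (auto simp: clockwise4)
next
  assume ?R
  then obtain a b c d where "distinct [a,b,c,d]" "a\<in>V" "b\<in>V" "c\<in>V" "d\<in>V"
   "cyc4 (pos a) (pos b) (pos c) (pos d)"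
   "(\<forall>i<4. \<forall>j<4. i \<noteq> j \<longrightarrow> (E ([a,b,c,d]!i) ([a,b,c,d]!j) \<longleftrightarrow> pat_adj F i j))" by blast
  then show ?L unfolding contains_pattern_def
    by (intro exI[of _ "[a,b,c,d]"]) (simp add: clockwise4)
qed

lemma contains3: "contains_pattern V E pos (3,F) \<longleftrightarrow> (\<exists>a b c. distinct [a,b,c] \<and> a\<in>V \<and> b\<in>V \<and> c\<in>V
   \<and> cyc3 (pos a) (pos b) (pos c) \<and>
   (\<forall>i<3. \<forall>j<3. i \<noteq> j \<longrightarrow> (E ([a,b,c]!i) ([a,b,c]!j) \<longleftrightarrow> pat_adj F i j)))"
  (is "?L \<longleftrightarrow> ?R")
proof
  assume ?L
  then obtain us where us: "length us = 3" "distinct us" "set us \<subseteq> V" "clockwise pos us"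
    "\<forall>i<3. \<forall>j<3. i \<noteq> j \<longrightarrow> (E (us!i) (us!j) \<longleftrightarrow> pat_adj F i j)"
    unfolding contains_pattern_def by auto
  from len3[OF us(1)] obtain a b c where "us = [a,b,c]" by blast
  with us show ?R by (auto simp: clockwise3)
next
  assume ?R
  then obtain a b c where "distinct [a,b,c]" "a\<in>V" "b\<in>V" "c\<in>V"
   "cyc3 (pos a) (pos b) (pos c)"
   "(\<forall>i<3. \<forall>j<3. i \<noteq> j \<longrightarrow> (E ([a,b,c]!i) ([a,b,c]!j) \<longleftrightarrow> pat_adj F i j))" by blast
  then show ?L unfolding contains_pattern_def
    by (intro exI[of _ "[a,b,c]"]) (simp add: clockwise3)
qed

lemma edges4_D:
  assumes H: "\<forall>i<4. \<forall>j<4. i \<noteq> j \<longrightarrow> (E ([a,b,c,d]!i) ([a,b,c,d]!j) \<longleftrightarrow> pat_adj F i j)"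
  shows "(E a b \<longleftrightarrow> pat_adj F 0 1)" "(E a c \<longleftrightarrow> pat_adj F 0 2)" "(E a d \<longleftrightarrow> pat_adj F 0 3)"
    "(E b c \<longleftrightarrow> pat_adj F 1 2)" "(E b d \<longleftrightarrow> pat_adj F 1 3)" "(E c d \<longleftrightarrow> pat_adj F 2 3)"
  using H[rule_format, of 0 1] H[rule_format, of 0 2] H[rule_format, of 0 3]
    H[rule_format, of 1 2] H[rule_format, of 1 3] H[rule_format, of 2 3] by simp_all

lemma edges3_D:
  assumes H: "\<forall>i<3. \<forall>j<3. i \<noteq> j \<longrightarrow> (E ([a,b,c]!i) ([a,b,c]!j) \<longleftrightarrow> pat_adj F i j)"
  shows "(E a b \<longleftrightarrow> pat_adj F 0 1)" "(E a c \<longleftrightarrow> pat_adj F 0 2)" "(E b c \<longleftrightarrow> pat_adj F 1 2)"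
  using H[rule_format, of 0 1] H[rule_format, of 0 2] H[rule_format, of 1 2] by simp_all

lemma edges4_I:
  assumes sym: "\<And>x y. E x y \<Longrightarrow> E y x"
    and "(E a b \<longleftrightarrow> pat_adj F 0 1)" "(E a c \<longleftrightarrow> pat_adj F 0 2)" "(E a d \<longleftrightarrow> pat_adj F 0 3)"
    "(E b c \<longleftrightarrow> pat_adj F 1 2)" "(E b d \<longleftrightarrow> pat_adj F 1 3)" "(E c d \<longleftrightarrow> pat_adj F 2 3)"
  shows "\<forall>i<4. \<forall>j<4. i \<noteq> j \<longrightarrow> (E ([a,b,c,d]!i) ([a,b,c,d]!j) \<longleftrightarrow> pat_adj F i j)"
proof -
  have s: "E x y \<longleftrightarrow> E y x" for x y using sym by blast
  have p: "pat_adj F i j \<longleftrightarrow> pat_adj F j i" for i j unfolding pat_adj_def by blast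
  show ?thesis unfolding all_less4 using assms(2-7) s[of a b] s[of a c] s[of a d] s[of b c] s[of b d] s[of c d]
    p[of 0 1] p[of 0 2] p[of 0 3] p[of 1 2] p[of 1 3] p[of 2 3] by simp
qed

lemma edges3_I:
  assumes sym: "\<And>x y. E x y \<Longrightarrow> E y x"
    and "(E a b \<longleftrightarrow> pat_adj F 0 1)" "(E a c \<longleftrightarrow> pat_adj F 0 2)" "(E b c \<longleftrightarrow> pat_adj F 1 2)"
  shows "\<forall>i<3. \<forall>j<3. i \<noteq> j \<longrightarrow> (E ([a,b,c]!i) ([a,b,c]!j) \<longleftrightarrow> pat_adj F i j)"
proof -
  have s: "E x y \<longleftrightarrow> E y x" for x y using sym by blast
  have p: "pat_adj F i j \<longleftrightarrow> pat_adj F j i" for i j unfolding pat_adj_def by blast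
  show ?thesis unfolding all_less3 using assms(2-4) s[of a b] s[of a c] s[of b c]
    p[of 0 1] p[of 0 2] p[of 1 2] by simp
qed

lemma mk4:
  assumes "distinct [a,b,c,d]" "a\<in>V" "b\<in>V" "c\<in>V" "d\<in>V" "cyc4 (pos a) (pos b) (pos c) (pos d)"
    "\<And>x y. E x y \<Longrightarrow> E y x"
    "(E a b \<longleftrightarrow> pat_adj F 0 1)" "(E a c \<longleftrightarrow> pat_adj F 0 2)" "(E a d \<longleftrightarrow> pat_adj F 0 3)"
    "(E b c \<longleftrightarrow> pat_adj F 1 2)" "(E b d \<longleftrightarrow> pat_adj F 1 3)" "(E c d \<longleftrightarrow> pat_adj F 2 3)"
  shows "contains_pattern V E pos (4,F)"
  unfolding contains4 using assms(1-6) edges4_I[of E, OF assms(7-13)] by blast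

lemma mk3:
  assumes "distinct [a,b,c]" "a\<in>V" "b\<in>V" "c\<in>V" "cyc3 (pos a) (pos b) (pos c)"
    "\<And>x y. E x y \<Longrightarrow> E y x"
    "(E a b \<longleftrightarrow> pat_adj F 0 1)" "(E a c \<longleftrightarrow> pat_adj F 0 2)" "(E b c \<longleftrightarrow> pat_adj F 1 2)"
  shows "contains_pattern V E pos (3,F)"
  unfolding contains3 using assms(1-5) edges3_I[of E, OF assms(6-9)] by blast

definition "TRI = {(0::nat,1::nat),(1,2),(2,0)}"
definition "SC4 = {(0::nat,1::nat),(1,2),(2,3),(3,0)}"
definition "OC4 = {(0::nat,1::nat),(1,3),(3,2),(2,0)}"
definition "SP4 = {(0::nat,1::nat),(1,2),(2,3)}"
definition "CP4 = {(2::nat,0::nat),(0,3),(3,1)}"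
definition "CLAW = {(2::nat,0::nat),(2,1),(2,3)}"

lemma LF_free_iff: "LF_free V E pos \<longleftrightarrow> \<not> contains_pattern V E pos (3,TRI) \<and> \<not> contains_pattern V E pos (4,SC4)
  \<and> \<not> contains_pattern V E pos (4,OC4) \<and> \<not> contains_pattern V E pos (4,SP4) \<and> \<not> contains_pattern V E pos (4,CP4)
  \<and> \<not> contains_pattern V E pos (4,CLAW)"
  unfolding LF_free_def LF_def TRI_def SC4_def OC4_def SP4_def CP4_def CLAW_def by simp

lemma padj:
  "pat_adj TRI 0 1" "pat_adj TRI 0 2" "pat_adj TRI 1 2"
  "pat_adj SC4 0 1" "\<not> pat_adj SC4 0 2" "pat_adj SC4 0 3" "pat_adj SC4 1 2" "\<not> pat_adj SC4 1 3" "pat_adj SC4 2 3"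
  "pat_adj OC4 0 1" "pat_adj OC4 0 2" "\<not> pat_adj OC4 0 3" "\<not> pat_adj OC4 1 2" "pat_adj OC4 1 3" "pat_adj OC4 2 3"
  "pat_adj SP4 0 1" "\<not> pat_adj SP4 0 2" "\<not> pat_adj SP4 0 3" "pat_adj SP4 1 2" "\<not> pat_adj SP4 1 3" "pat_adj SP4 2 3"
  "\<not> pat_adj CP4 0 1" "pat_adj CP4 0 2" "pat_adj CP4 0 3" "\<not> pat_adj CP4 1 2" "pat_adj CP4 1 3" "\<not> pat_adj CP4 2 3"
  "\<not> pat_adj CLAW 0 1" "pat_adj CLAW 0 2" "\<not> pat_adj CLAW 0 3" "pat_adj CLAW 1 2" "\<not> pat_adj CLAW 1 3" "pat_adj CLAW 2 3"
  unfolding pat_adj_def TRI_def SC4_def OC4_def SP4_def CP4_def CLAW_def by simp_all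

definition noTri :: "('a \<Rightarrow> 'a \<Rightarrow> bool) \<Rightarrow> bool" where
  "noTri E \<longleftrightarrow> (\<forall>a b c. E a b \<longrightarrow> E b c \<longrightarrow> E c a \<longrightarrow> False)"
definition deg2 :: "('a \<Rightarrow> 'a \<Rightarrow> bool) \<Rightarrow> bool" where
  "deg2 E \<longleftrightarrow> (\<forall>x a b c. E x a \<longrightarrow> E x b \<longrightarrow> E x c \<longrightarrow> a = b \<or> a = c \<or> b = c)"
definition noC4 :: "('a \<Rightarrow> 'a \<Rightarrow> bool) \<Rightarrow> bool" where
  "noC4 E \<longleftrightarrow> (\<forall>a b c d. E a b \<longrightarrow> E b c \<longrightarrow> E c d \<longrightarrow> E d a \<longrightarrow> a \<noteq> c \<longrightarrow> b \<noteq> d \<longrightarrow> False)"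
definition p4good :: "'a set \<Rightarrow> ('a \<Rightarrow> 'a \<Rightarrow> bool) \<Rightarrow> ('a \<Rightarrow> nat) \<Rightarrow> bool" where
  "p4good V E pos \<longleftrightarrow> (\<forall>a b c d. a\<in>V \<longrightarrow> b\<in>V \<longrightarrow> c\<in>V \<longrightarrow> d\<in>V \<longrightarrow> E a b \<longrightarrow> E b c \<longrightarrow> E c d \<longrightarrow>
     a \<noteq> c \<longrightarrow> b \<noteq> d \<longrightarrow> a \<noteq> d \<longrightarrow> \<not> E a c \<longrightarrow> \<not> E b d \<longrightarrow> \<not> E a d \<longrightarrow>
     (btw3 (pos b) (pos a) (pos c) \<longleftrightarrow> \<not> btw3 (pos b) (pos d) (pos c)))"

lemma sg_facts:
  assumes "simple_graph V E"
  shows "\<And>x y. E x y \<Longrightarrow> E y x" "\<And>x. \<not> E x x" "\<And>x y. E x y \<Longrightarrow> x \<in> V" "\<And>x y. E x y \<Longrightarrow> y \<in> V" "finite V"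
  using assms unfolding simple_graph_def by blast+

lemma conds_to_LF:
  assumes sg: "simple_graph V E" and t: "noTri E" and dg: "deg2 E" and c4: "noC4 E" and p4: "p4good V E pos"
  shows "LF_free V E pos"
proof -
  note s = sg_facts[OF sg]
  have "\<not> contains_pattern V E pos (3,TRI)"
  proof
    assume "contains_pattern V E pos (3,TRI)"
    then obtain a b c where ed: "\<forall>i<3. \<forall>j<3. i \<noteq> j \<longrightarrow> (E ([a,b,c]!i) ([a,b,c]!j) \<longleftrightarrow> pat_adj TRI i j)"
      unfolding contains3 by blast
    note e = edges3_D[OF ed, simplified padj simp_thms]
    show False using t[unfolded noTri_def, rule_format, of a b c] e s(1)[of a c] by blast
  qed
  moreover have "\<not> contains_pattern V E pos (4,SC4)"
  proof
    assume "contains_pattern V E pos (4,SC4)"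
    then obtain a b c d where "distinct [a,b,c,d]" and ed: "\<forall>i<4. \<forall>j<4. i \<noteq> j \<longrightarrow> (E ([a,b,c,d]!i) ([a,b,c,d]!j) \<longleftrightarrow> pat_adj SC4 i j)"
      unfolding contains4 by blast
    note e = edges4_D[OF ed, simplified padj simp_thms]
    have "a \<noteq> c" "b \<noteq> d" using \<open>distinct [a,b,c,d]\<close> by auto
    then show False using c4[unfolded noC4_def, rule_format, of a b c d] e s(1)[of a d] by blast
  qed
  moreover have "\<not> contains_pattern V E pos (4,OC4)"
  proof
    assume "contains_pattern V E pos (4,OC4)"
    then obtain a b c d where "distinct [a,b,c,d]" and ed: "\<forall>i<4. \<forall>j<4. i \<noteq> j \<longrightarrow> (E ([a,b,c,d]!i) ([a,b,c,d]!j) \<longleftrightarrow> pat_adj OC4 i j)"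
      unfolding contains4 by blast
    note e = edges4_D[OF ed, simplified padj simp_thms]
    have "a \<noteq> d" "b \<noteq> c" using \<open>distinct [a,b,c,d]\<close> by auto
    then show False using c4[unfolded noC4_def, rule_format, of a b d c] e s(1)[of c d] s(1)[of a c] by blast
  qed
  moreover have "\<not> contains_pattern V E pos (4,SP4)"
  proof
    assume "contains_pattern V E pos (4,SP4)"
    then obtain a b c d where d: "distinct [a,b,c,d]" "a\<in>V" "b\<in>V" "c\<in>V" "d\<in>V" "cyc4 (pos a) (pos b) (pos c) (pos d)"
      and ed: "\<forall>i<4. \<forall>j<4. i \<noteq> j \<longrightarrow> (E ([a,b,c,d]!i) ([a,b,c,d]!j) \<longleftrightarrow> pat_adj SP4 i j)"
      unfolding contains4 by blast
    note e = edges4_D[OF ed, simplified padj simp_thms]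
    have "a \<noteq> c" "b \<noteq> d" "a \<noteq> d" using d(1) by auto
    then have "btw3 (pos b) (pos a) (pos c) \<longleftrightarrow> \<not> btw3 (pos b) (pos d) (pos c)"
      using p4[unfolded p4good_def, rule_format, of a b c d] d e by blast
    then show False using sp4_bad[OF d(6)] by blast
  qed
  moreover have "\<not> contains_pattern V E pos (4,CP4)"
  proof
    assume "contains_pattern V E pos (4,CP4)"
    then obtain a b c d where d: "distinct [a,b,c,d]" "a\<in>V" "b\<in>V" "c\<in>V" "d\<in>V" "cyc4 (pos a) (pos b) (pos c) (pos d)"
      and ed: "\<forall>i<4. \<forall>j<4. i \<noteq> j \<longrightarrow> (E ([a,b,c,d]!i) ([a,b,c,d]!j) \<longleftrightarrow> pat_adj CP4 i j)"
      unfolding contains4 by blast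
    note e = edges4_D[OF ed, simplified padj simp_thms]
    have "c \<noteq> d" "a \<noteq> b" "c \<noteq> b" using d(1) by auto
    moreover have "E c a" "\<not> E c d" "\<not> E c b" using e s(1)[of a c] s(1)[of c b] by blast+
    ultimately have "btw3 (pos a) (pos c) (pos d) \<longleftrightarrow> \<not> btw3 (pos a) (pos b) (pos d)"
      using p4[unfolded p4good_def, rule_format, of c a d b] d e s(1)[of b d] by blast
    then show False using cp4_bad[OF d(6)] by blast
  qed
  moreover have "\<not> contains_pattern V E pos (4,CLAW)"
  proof
    assume "contains_pattern V E pos (4,CLAW)"
    then obtain a b c d where d: "distinct [a,b,c,d]"
      and ed: "\<forall>i<4. \<forall>j<4. i \<noteq> j \<longrightarrow> (E ([a,b,c,d]!i) ([a,b,c,d]!j) \<longleftrightarrow> pat_adj CLAW i j)"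
      unfolding contains4 by blast
    note e = edges4_D[OF ed, simplified padj simp_thms]
    have "E c a" "E c b" "E c d" using e s(1)[of a c] s(1)[of b c] by blast+
    then show False using dg[unfolded deg2_def, rule_format, of c a b d] d by auto
  qed
  ultimately show ?thesis unfolding LF_free_iff by blast
qed


lemma tri_n: assumes "\<not> contains_pattern V E pos (3,TRI)" "\<And>x y. E x y \<Longrightarrow> E y x"
  "distinct [a,b,c]" "a\<in>V" "b\<in>V" "c\<in>V" "E a b" "E b c" "E a c"
  shows "\<not> cyc3 (pos a) (pos b) (pos c)"
  proof
  assume cy: "cyc3 (pos a) (pos b) (pos c)"
  have "contains_pattern V E pos (3,TRI)"
    by (rule mk3[OF assms(3-6) cy assms(2)]) (use assms(7-9) in \<open>simp_all only: padj simp_thms\<close>)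
  with assms(1) show False by blast
qed

lemma sc4_n: assumes "\<not> contains_pattern V E pos (4,SC4)" "\<And>x y. E x y \<Longrightarrow> E y x"
  "distinct [a,b,c,d]" "a\<in>V" "b\<in>V" "c\<in>V" "d\<in>V" "E a b" "E b c" "E c d" "E a d" "\<not> E a c" "\<not> E b d"
  shows "\<not> cyc4 (pos a) (pos b) (pos c) (pos d)"
  proof
  assume cy: "cyc4 (pos a) (pos b) (pos c) (pos d)"
  have "contains_pattern V E pos (4,SC4)"
    by (rule mk4[OF assms(3-7) cy assms(2)]) (use assms(8-13) in \<open>simp_all only: padj simp_thms\<close>)
  with assms(1) show False by blast
qed

lemma oc4_n: assumes "\<not> contains_pattern V E pos (4,OC4)" "\<And>x y. E x y \<Longrightarrow> E y x"
  "distinct [a,b,c,d]" "a\<in>V" "b\<in>V" "c\<in>V" "d\<in>V" "E a b" "E b d" "E c d" "E a c" "\<not> E a d" "\<not> E b c"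
  shows "\<not> cyc4 (pos a) (pos b) (pos c) (pos d)"
  proof
  assume cy: "cyc4 (pos a) (pos b) (pos c) (pos d)"
  have "contains_pattern V E pos (4,OC4)"
    by (rule mk4[OF assms(3-7) cy assms(2)]) (use assms(8-13) in \<open>simp_all only: padj simp_thms\<close>)
  with assms(1) show False by blast
qed

lemma sp4_n: assumes "\<not> contains_pattern V E pos (4,SP4)" "\<And>x y. E x y \<Longrightarrow> E y x"
  "distinct [a,b,c,d]" "a\<in>V" "b\<in>V" "c\<in>V" "d\<in>V" "E a b" "E b c" "E c d" "\<not> E a c" "\<not> E b d" "\<not> E a d"
  shows "\<not> cyc4 (pos a) (pos b) (pos c) (pos d)"
  proof
  assume cy: "cyc4 (pos a) (pos b) (pos c) (pos d)"
  have "contains_pattern V E pos (4,SP4)"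
    by (rule mk4[OF assms(3-7) cy assms(2)]) (use assms(8-13) in \<open>simp_all only: padj simp_thms\<close>)
  with assms(1) show False by blast
qed

lemma cp4_n: assumes "\<not> contains_pattern V E pos (4,CP4)" "\<And>x y. E x y \<Longrightarrow> E y x"
  "distinct [a,b,c,d]" "a\<in>V" "b\<in>V" "c\<in>V" "d\<in>V" "E a c" "E a d" "E b d" "\<not> E a b" "\<not> E c d" "\<not> E b c"
  shows "\<not> cyc4 (pos a) (pos b) (pos c) (pos d)"
  proof
  assume cy: "cyc4 (pos a) (pos b) (pos c) (pos d)"
  have "contains_pattern V E pos (4,CP4)"
    by (rule mk4[OF assms(3-7) cy assms(2)]) (use assms(8-13) in \<open>simp_all only: padj simp_thms\<close>)
  with assms(1) show False by blast
qed

lemma claw_n: assumes "\<not> contains_pattern V E pos (4,CLAW)" "\<And>x y. E x y \<Longrightarrow> E y x"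
  "distinct [a,b,c,d]" "a\<in>V" "b\<in>V" "c\<in>V" "d\<in>V" "E a c" "E b c" "E c d" "\<not> E a b" "\<not> E a d" "\<not> E b d"
  shows "\<not> cyc4 (pos a) (pos b) (pos c) (pos d)"
  proof
  assume cy: "cyc4 (pos a) (pos b) (pos c) (pos d)"
  have "contains_pattern V E pos (4,CLAW)"
    by (rule mk4[OF assms(3-7) cy assms(2)]) (use assms(8-13) in \<open>simp_all only: padj simp_thms\<close>)
  with assms(1) show False by blast
qed

lemma LF_to_conds:
  assumes sg: "simple_graph V E" and inj: "inj_on pos V" and lf: "LF_free V E pos"
  shows "noTri E \<and> deg2 E \<and> noC4 E \<and> p4good V E pos"
proof -
  note s = sg_facts[OF sg]
  have s': "E x y \<longleftrightarrow> E y x" for x y using s(1) by blast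
  note lf' = lf[unfolded LF_free_iff]
  have pd: "pos x \<noteq> pos y" if "x \<in> V" "y \<in> V" "x \<noteq> y" for x y
    using inj that by (auto dest: inj_onD)
  have T: "noTri E" unfolding noTri_def
  proof (intro allI impI)
    fix a b c assume ab: "E a b" and bc: "E b c" and ca: "E c a"
    have V: "a\<in>V" "b\<in>V" "c\<in>V" using s(3) ab bc ca by blast+
    have dist: "distinct [a,b,c]" using s(2) ab bc ca by auto
    have "distinct [pos a, pos b, pos c]" using pd V dist by auto
    from arr_3[OF this] show False
    proof
      assume "cyc3 (pos a) (pos b) (pos c)"
      moreover have "\<not> cyc3 (pos a) (pos b) (pos c)"
        by (rule tri_n[OF conjunct1[OF lf'] s(1)]) (use V dist ab bc ca s' in auto)
      ultimately show False by blast
    next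
      assume "cyc3 (pos a) (pos c) (pos b)"
      moreover have "\<not> cyc3 (pos a) (pos c) (pos b)"
        by (rule tri_n[OF conjunct1[OF lf'] s(1)]) (use V dist ab bc ca s' in auto)
      ultimately show False by blast
    qed
  qed
  have D: "deg2 E" unfolding deg2_def
  proof (intro allI impI)
    fix x a b c assume xa: "E x a" and xb: "E x b" and xc: "E x c"
    show "a = b \<or> a = c \<or> b = c"
    proof (rule ccontr)
      assume "\<not> (a = b \<or> a = c \<or> b = c)"
      then have dist: "distinct [x,a,b,c]" using s(2) xa xb xc by auto
      have V: "x\<in>V" "a\<in>V" "b\<in>V" "c\<in>V" using s(3,4) xa xb xc by blast+
      have n: "\<not> E a b" "\<not> E a c" "\<not> E b c" using T xa xb xc s' unfolding noTri_def by blast+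
      have "distinct [pos x, pos a, pos b, pos c]" using pd V dist by auto
      note A = arr_claw[OF this]
      have C: "\<not> cyc4 (pos u) (pos v) (pos x) (pos w)"
        if "u \<in> {a,b,c}" "v \<in> {a,b,c}" "w \<in> {a,b,c}" "distinct [u,v,w]" for u v w
        by (rule claw_n[OF conjunct2[OF conjunct2[OF conjunct2[OF conjunct2[OF conjunct2[OF lf']]]]] s(1)])
          (use that V dist xa xb xc n s' in auto)
      show False using A C[of b c a] C[of c b a] C[of a c b] C[of c a b] C[of a b c] C[of b a c] dist by auto
    qed
  qed
  have C4: "noC4 E" unfolding noC4_def
  proof (intro allI impI)
    fix a b c d assume ab: "E a b" and bc: "E b c" and cd: "E c d" and da: "E d a" and "a \<noteq> c" "b \<noteq> d"
    then have dist: "distinct [a,b,c,d]" using s(2) by auto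
    have V: "a\<in>V" "b\<in>V" "c\<in>V" "d\<in>V" using s(3) ab bc cd da by blast+
    have n: "\<not> E a c" "\<not> E b d" using T ab bc cd da s' unfolding noTri_def by blast+
    have "distinct [pos a, pos b, pos c, pos d]" using pd V dist by auto
    note A = arr_c4[OF this]
    have S: "\<not> cyc4 (pos a) (pos b) (pos c) (pos d)" "\<not> cyc4 (pos a) (pos d) (pos c) (pos b)"
      by (rule sc4_n[OF conjunct1[OF conjunct2[OF lf']] s(1)]; use V dist ab bc cd da n s' in auto)+
    have O: "\<not> cyc4 (pos a) (pos b) (pos d) (pos c)" "\<not> cyc4 (pos c) (pos d) (pos b) (pos a)"
       "\<not> cyc4 (pos c) (pos b) (pos d) (pos a)" "\<not> cyc4 (pos a) (pos d) (pos b) (pos c)"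
      by (rule oc4_n[OF conjunct1[OF conjunct2[OF conjunct2[OF lf']]] s(1)]; use V dist ab bc cd da n s' in auto)+
    show False using A S O by blast
  qed
  have P: "p4good V E pos" unfolding p4good_def
  proof (intro allI impI)
    fix a b c d assume V: "a\<in>V" "b\<in>V" "c\<in>V" "d\<in>V" and ab: "E a b" and bc: "E b c" and cd: "E c d"
      and ne: "a \<noteq> c" "b \<noteq> d" "a \<noteq> d" and n: "\<not> E a c" "\<not> E b d" "\<not> E a d"
    have dist: "distinct [a,b,c,d]" using s(2) ab bc cd ne by auto
    have dp: "distinct [pos a, pos b, pos c, pos d]" using pd V dist by auto
    show "btw3 (pos b) (pos a) (pos c) \<longleftrightarrow> \<not> btw3 (pos b) (pos d) (pos c)"
    proof (rule ccontr)
      assume "\<not> (btw3 (pos b) (pos a) (pos c) \<longleftrightarrow> \<not> btw3 (pos b) (pos d) (pos c))"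
      then have "btw3 (pos b) (pos a) (pos c) \<longleftrightarrow> btw3 (pos b) (pos d) (pos c)" by blast
      note A = arr_p4[OF dp this]
      have S: "\<not> cyc4 (pos a) (pos b) (pos c) (pos d)" "\<not> cyc4 (pos d) (pos c) (pos b) (pos a)"
        by (rule sp4_n[OF conjunct1[OF conjunct2[OF conjunct2[OF conjunct2[OF lf']]]] s(1)]; use V dist ab bc cd n s' in auto)+
      have C: "\<not> cyc4 (pos b) (pos d) (pos a) (pos c)" "\<not> cyc4 (pos c) (pos a) (pos d) (pos b)"
        by (rule cp4_n[OF conjunct1[OF conjunct2[OF conjunct2[OF conjunct2[OF conjunct2[OF lf']]]]] s(1)]; use V dist ab bc cd n s' in auto)+
      show False using A S C by blast
    qed
  qed
  show ?thesis using T D C4 P by blast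
qed

lemma btw_sub1: "btw3 a c b \<Longrightarrow> btw3 a x c \<Longrightarrow> btw3 a x b"
  unfolding btw3_def by auto
lemma btw_sub2: "btw3 a c b \<Longrightarrow> btw3 c x b \<Longrightarrow> btw3 a x b"
  unfolding btw3_def by auto
lemma btw_irr: "\<not> btw3 a x x" "\<not> btw3 x x b"
  unfolding btw3_def by auto

definition arc :: "'a set \<Rightarrow> ('a \<Rightarrow> nat) \<Rightarrow> 'a \<Rightarrow> 'a \<Rightarrow> 'a set" where
  "arc V pos u w = {x\<in>V. btw3 (pos u) (pos x) (pos w)}"

lemma degen:
  assumes sg: "simple_graph V E" and T: "noTri E" and D: "deg2 E" and C4: "noC4 E" and P: "p4good V E pos"
    and SV: "S \<subseteq> V" and Sne: "S \<noteq> {}"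
  shows "\<exists>v\<in>S. \<forall>a b. a \<in> S \<longrightarrow> b \<in> S \<longrightarrow> E v a \<longrightarrow> E v b \<longrightarrow> a = b"
proof (rule ccontr)
  note s = sg_facts[OF sg]
  assume "\<not> ?thesis"
  then have H: "\<And>v. v \<in> S \<Longrightarrow> \<exists>a b. a \<in> S \<and> b \<in> S \<and> E v a \<and> E v b \<and> a \<noteq> b" by blast
  obtain v0 where "v0 \<in> S" using Sne by blast
  then obtain w0 where "w0 \<in> S" "E v0 w0" using H by blast
  define Q where "Q = (\<lambda>pr. fst pr \<in> S \<and> snd pr \<in> S \<and> E (fst pr) (snd pr))"
  have "Q (v0, w0)" unfolding Q_def using \<open>v0 \<in> S\<close> \<open>w0 \<in> S\<close> \<open>E v0 w0\<close> by simp
  then obtain pr where Qpr: "Q pr" and minpr: "\<And>pr'. Q pr' \<Longrightarrow> card (arc V pos (fst pr) (snd pr)) \<le> card (arc V pos (fst pr') (snd pr'))"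
    using ex_has_least_nat[of Q "(v0,w0)" "\<lambda>pr. card (arc V pos (fst pr) (snd pr))"] by blast
  obtain v1 v2 where pr: "pr = (v1, v2)" by (cases pr)
  have v12: "v1 \<in> S" "v2 \<in> S" "E v1 v2" using Qpr unfolding Q_def pr by auto
  have minv: "card (arc V pos v1 v2) \<le> card (arc V pos u w)" if "u \<in> S" "w \<in> S" "E u w" for u w
    using minpr[of "(u,w)"] that unfolding Q_def pr by auto
  obtain v0 where v0: "v0 \<in> S" "E v1 v0" "v0 \<noteq> v2"
  proof -
    obtain a b where "a \<in> S" "b \<in> S" "E v1 a" "E v1 b" "a \<noteq> b" using H[OF v12(1)] by blast
    then show ?thesis using that by (cases "a = v2") auto
  qed
  obtain v3 where v3: "v3 \<in> S" "E v2 v3" "v3 \<noteq> v1"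
  proof -
    obtain a b where "a \<in> S" "b \<in> S" "E v2 a" "E v2 b" "a \<noteq> b" using H[OF v12(2)] by blast
    then show ?thesis using that by (cases "a = v1") auto
  qed
  have "v0 \<noteq> v3" using T v0 v3 v12 s(1) unfolding noTri_def by blast
  have n02: "\<not> E v0 v2" using T v0 v12 s(1) unfolding noTri_def by blast
  have n13: "\<not> E v1 v3" using T v3 v12 s(1) unfolding noTri_def by blast
  have n03: "\<not> E v0 v3"
  proof
    assume "E v0 v3"
    then show False using C4[unfolded noC4_def, rule_format, of v0 v1 v2 v3] v0 v3 v12 s(1)[of v1 v0] s(1)[of v0 v3] by blast
  qed
  have VV: "v0 \<in> V" "v1 \<in> V" "v2 \<in> V" "v3 \<in> V" using SV v0 v3 v12 by auto
  have good: "btw3 (pos v1) (pos v0) (pos v2) \<longleftrightarrow> \<not> btw3 (pos v1) (pos v3) (pos v2)"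
    using P[unfolded p4good_def, rule_format, of v0 v1 v2 v3] VV v0 v3 v12 n02 n13 n03 \<open>v0 \<noteq> v3\<close> s(1)[of v1 v0] by blast
  have fin: "finite (arc V pos v1 v2)" using s(5) unfolding arc_def by simp
  show False
  proof (cases "btw3 (pos v1) (pos v0) (pos v2)")
    case True
    have "arc V pos v1 v0 \<subset> arc V pos v1 v2"
    proof
      show "arc V pos v1 v0 \<subseteq> arc V pos v1 v2" unfolding arc_def using btw_sub1[OF True] by auto
      have "v0 \<in> arc V pos v1 v2" "v0 \<notin> arc V pos v1 v0" unfolding arc_def using True VV btw_irr by auto
      then show "arc V pos v1 v0 \<noteq> arc V pos v1 v2" by blast
    qed
    then have "card (arc V pos v1 v0) < card (arc V pos v1 v2)" using fin psubset_card_mono by blast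
    moreover have "card (arc V pos v1 v2) \<le> card (arc V pos v1 v0)" using minv[OF v12(1) v0(1) v0(2)] .
    ultimately show False by simp
  next
    case False
    then have B: "btw3 (pos v1) (pos v3) (pos v2)" using good by blast
    have "arc V pos v3 v2 \<subset> arc V pos v1 v2"
    proof
      show "arc V pos v3 v2 \<subseteq> arc V pos v1 v2" unfolding arc_def using btw_sub2[OF B] by auto
      have "v3 \<in> arc V pos v1 v2" "v3 \<notin> arc V pos v3 v2" unfolding arc_def using B VV btw_irr by auto
      then show "arc V pos v3 v2 \<noteq> arc V pos v1 v2" by blast
    qed
    then have "card (arc V pos v3 v2) < card (arc V pos v1 v2)" using fin psubset_card_mono by blast
    moreover have "card (arc V pos v1 v2) \<le> card (arc V pos v3 v2)" using minv[OF v3(1) v12(2) s(1)[OF v3(2)]] .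
    ultimately show False by simp
  qed
qed

definition pathrep :: "('a \<Rightarrow> 'a \<Rightarrow> bool) \<Rightarrow> 'a list \<Rightarrow> bool" where
  "pathrep E p \<longleftrightarrow> (\<forall>i j. i < length p \<longrightarrow> j < length p \<longrightarrow> (E (p!i) (p!j) \<longleftrightarrow> (j = Suc i \<or> i = Suc j)))"

lemma edge_idx:
  assumes "distinct p" "i < length p" "j < length p"
  shows "(\<exists>k. Suc k < length p \<and> {p!k, p!Suc k} = {p!i, p!j}) \<longleftrightarrow> (j = Suc i \<or> i = Suc j)"
proof -
  have *: "{p!k, p!Suc k} = {p!i, p!j} \<longleftrightarrow> (k = i \<and> Suc k = j) \<or> (k = j \<and> Suc k = i)" if "Suc k < length p" for k
    using that assms by (auto simp: doubleton_eq_iff nth_eq_iff_index_eq)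
  show ?thesis
  proof
    assume "\<exists>k. Suc k < length p \<and> {p!k, p!Suc k} = {p!i, p!j}"
    then obtain k where "Suc k < length p" "{p!k, p!Suc k} = {p!i, p!j}" by blast
    then show "j = Suc i \<or> i = Suc j" using * by blast
  next
    assume "j = Suc i \<or> i = Suc j"
    then show "\<exists>k. Suc k < length p \<and> {p!k, p!Suc k} = {p!i, p!j}"
    proof
      assume "j = Suc i" then show ?thesis using *[of i] assms by (intro exI[of _ i]) auto
    next
      assume "i = Suc j" then show ?thesis using *[of j] assms by (intro exI[of _ j]) auto
    qed
  qed
qed

lemma ip_iff: "induces_path E S \<longleftrightarrow> (\<exists>p. distinct p \<and> set p = S \<and> pathrep E p)"
proof -
  have eq: "(\<forall>x\<in>set p. \<forall>y\<in>set p. E x y \<longleftrightarrow> (\<exists>i. Suc i < length p \<and> {p!i, p!Suc i} = {x,y})) \<longleftrightarrow> pathrep E p"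
    if "distinct p" for p
  proof
    assume H: "\<forall>x\<in>set p. \<forall>y\<in>set p. E x y \<longleftrightarrow> (\<exists>i. Suc i < length p \<and> {p!i, p!Suc i} = {x,y})"
    show "pathrep E p" unfolding pathrep_def
    proof (intro allI impI)
      fix i j assume "i < length p" "j < length p"
      then show "E (p!i) (p!j) \<longleftrightarrow> (j = Suc i \<or> i = Suc j)"
        using H edge_idx[OF that] by (simp add: nth_mem)
    qed
  next
    assume H: "pathrep E p"
    show "\<forall>x\<in>set p. \<forall>y\<in>set p. E x y \<longleftrightarrow> (\<exists>i. Suc i < length p \<and> {p!i, p!Suc i} = {x,y})"
    proof (intro ballI)
      fix x y assume "x \<in> set p" "y \<in> set p"
      then obtain i j where "i < length p" "j < length p" "x = p!i" "y = p!j" by (auto simp: in_set_conv_nth)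
      then show "E x y \<longleftrightarrow> (\<exists>i. Suc i < length p \<and> {p!i, p!Suc i} = {x,y})"
        using H edge_idx[OF that] unfolding pathrep_def by simp
    qed
  qed
  show ?thesis
  proof
    assume "induces_path E S"
    then obtain p where "distinct p" "set p = S" "\<forall>x\<in>S. \<forall>y\<in>S. E x y \<longleftrightarrow> (\<exists>i. Suc i < length p \<and> {p!i, p!Suc i} = {x,y})"
      unfolding induces_path_def by blast
    then show "\<exists>p. distinct p \<and> set p = S \<and> pathrep E p" using eq by blast
  next
    assume "\<exists>p. distinct p \<and> set p = S \<and> pathrep E p"
    then obtain p where "distinct p" "set p = S" "pathrep E p" by blast
    then show "induces_path E S" unfolding induces_path_def using eq by blast
  qed
qed

lemma pathrep_rev: assumes "pathrep E p" shows "pathrep E (rev p)"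
  unfolding pathrep_def
proof (intro allI impI)
  fix i j assume i: "i < length (rev p)" and j: "j < length (rev p)"
  have "E (rev p ! i) (rev p ! j) \<longleftrightarrow> (length p - Suc j = Suc (length p - Suc i) \<or> length p - Suc i = Suc (length p - Suc j))"
    using assms[unfolded pathrep_def, rule_format, of "length p - Suc i" "length p - Suc j"] i j by (simp add: rev_nth)
  also have "\<dots> \<longleftrightarrow> (j = Suc i \<or> i = Suc j)" using i j by auto
  finally show "E (rev p ! i) (rev p ! j) \<longleftrightarrow> (j = Suc i \<or> i = Suc j)" .
qed

lemma pathrep_cons:
  assumes "pathrep E q" "\<not> E v v" "\<And>j. j < length q \<Longrightarrow> E v (q!j) \<longleftrightarrow> j = 0" "\<And>j. j < length q \<Longrightarrow> E (q!j) v \<longleftrightarrow> j = 0"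
  shows "pathrep E (v # q)"
  unfolding pathrep_def
proof (intro allI impI)
  fix i j assume "i < length (v#q)" "j < length (v#q)"
  then show "E ((v#q)!i) ((v#q)!j) \<longleftrightarrow> (j = Suc i \<or> i = Suc j)"
    using assms unfolding pathrep_def by (cases i; cases j) auto
qed

lemma pathrep_cong: assumes "\<And>x y. x \<in> set p \<Longrightarrow> y \<in> set p \<Longrightarrow> E x y = E' x y"
  shows "pathrep E p = pathrep E' p"
  unfolding pathrep_def using assms by (metis nth_mem)

lemma endpoint:
  assumes d: "distinct p" and pr: "pathrep E p" and u: "u \<in> set p"
    and deg: "\<forall>a b. a \<in> set p \<longrightarrow> b \<in> set p \<longrightarrow> E u a \<longrightarrow> E u b \<longrightarrow> a = b"
  shows "\<exists>q. distinct q \<and> set q = set p \<and> pathrep E q \<and> q ! 0 = u"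
proof -
  obtain k where k: "k < length p" "p!k = u" using u by (auto simp: in_set_conv_nth)
  have "k = 0 \<or> k = length p - 1"
  proof (rule ccontr)
    assume "\<not> (k = 0 \<or> k = length p - 1)"
    then have k1: "0 < k" "Suc k < length p" using k by auto
    then have "E u (p!(k-1))" "E u (p!Suc k)" using pr k unfolding pathrep_def by auto
    moreover have "p!(k-1) \<noteq> p!(Suc k)" using d k1 by (simp add: nth_eq_iff_index_eq)
    moreover have "p!(k-1) \<in> set p" "p!(Suc k) \<in> set p" using k1 by auto
    ultimately show False using deg by blast
  qed
  then show ?thesis
  proof
    assume "k = 0" then show ?thesis using d pr k by blast
  next
    assume kk: "k = length p - 1"
    have "p \<noteq> []" using u by auto
    then have "rev p ! 0 = p ! (length p - 1)" using rev_nth[of 0 p] by simp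
    then have "rev p ! 0 = u" using k kk by simp
    then show ?thesis using d pr pathrep_rev[OF pr] by (intro exI[of _ "rev p"]) auto
  qed
qed

lemma rtc_sym: assumes "\<And>x y. E x y \<Longrightarrow> E y x" "E\<^sup>*\<^sup>* x y" shows "E\<^sup>*\<^sup>* y x"
  using assms(2)
proof (induction rule: rtranclp_induct)
  case base then show ?case by simp
next
  case (step y z) then show ?case using assms(1) by (meson converse_rtranclp_into_rtranclp)
qed

lemma lf_induct:
  assumes "simple_graph V E" "deg2 E"
    "\<forall>S. S \<subseteq> V \<longrightarrow> S \<noteq> {} \<longrightarrow> (\<exists>v\<in>S. \<forall>a b. a \<in> S \<longrightarrow> b \<in> S \<longrightarrow> E v a \<longrightarrow> E v b \<longrightarrow> a = b)"
  shows "linear_forest V E"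
  using assms
proof (induction "card V" arbitrary: V E rule: less_induct)
  case less
  note s = sg_facts[OF less.prems(1)]
  show ?case
  proof (cases "V = {}")
    case True then show ?thesis unfolding linear_forest_def by simp
  next
    case False
    then obtain v where v: "v \<in> V" "\<forall>a b. a \<in> V \<longrightarrow> b \<in> V \<longrightarrow> E v a \<longrightarrow> E v b \<longrightarrow> a = b"
      using less.prems(3) by blast
    define V' where "V' = V - {v}"
    define E' where "E' = (\<lambda>x y. E x y \<and> x \<noteq> v \<and> y \<noteq> v)"
    have sg': "simple_graph V' E'" using less.prems(1) unfolding simple_graph_def V'_def E'_def by auto
    have d2': "deg2 E'" using less.prems(2) unfolding deg2_def E'_def by blast
    have dg': "\<forall>S. S \<subseteq> V' \<longrightarrow> S \<noteq> {} \<longrightarrow> (\<exists>w\<in>S. \<forall>a b. a \<in> S \<longrightarrow> b \<in> S \<longrightarrow> E' w a \<longrightarrow> E' w b \<longrightarrow> a = b)"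
    proof (intro allI impI)
      fix S assume "S \<subseteq> V'" "S \<noteq> {}"
      then have "S \<subseteq> V" unfolding V'_def by blast
      then obtain w where "w \<in> S" "\<forall>a b. a \<in> S \<longrightarrow> b \<in> S \<longrightarrow> E w a \<longrightarrow> E w b \<longrightarrow> a = b"
        using less.prems(3) \<open>S \<noteq> {}\<close> by blast
      then show "\<exists>w\<in>S. \<forall>a b. a \<in> S \<longrightarrow> b \<in> S \<longrightarrow> E' w a \<longrightarrow> E' w b \<longrightarrow> a = b" unfolding E'_def by blast
    qed
    have "card V' < card V" unfolding V'_def by (rule card_Diff1_less[OF s(5) v(1)])
    then have lf': "linear_forest V' E'" using less.hyps sg' d2' dg' by blast
    have E'E: "E\<^sup>*\<^sup>* a b" if "E'\<^sup>*\<^sup>* a b" for a b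
      using that by (induction rule: rtranclp_induct) (auto simp: E'_def intro: rtranclp.rtrancl_into_rtrancl)
    have noV: "b \<noteq> v" if "E'\<^sup>*\<^sup>* a b" "a \<noteq> v" for a b
      using that by (induction rule: rtranclp_induct) (auto simp: E'_def)
    have away: "E'\<^sup>*\<^sup>* a b" if "E\<^sup>*\<^sup>* a b" "\<not> E\<^sup>*\<^sup>* a v" for a b
      using that
    proof (induction rule: rtranclp_induct)
      case base then show ?case by simp
    next
      case (step y z)
      have "y \<noteq> v" using step.hyps(1) step.prems by blast
      moreover have "z \<noteq> v" using step.hyps step.prems by (metis rtranclp.rtrancl_into_rtrancl)
      ultimately have "E' y z" using step.hyps(2) unfolding E'_def by simp
      then show ?case using step.IH step.prems by (meson rtranclp.rtrancl_into_rtrancl)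
    qed
    have ipc: "induces_path E S \<longleftrightarrow> induces_path E' S" if "v \<notin> S" for S
    proof -
      have "pathrep E p = pathrep E' p" if "set p = S" for p
        by (rule pathrep_cong) (use that \<open>v \<notin> S\<close> in \<open>auto simp: E'_def\<close>)
      then show ?thesis unfolding ip_iff by blast
    qed
    show "linear_forest V E" unfolding linear_forest_def
    proof
      fix x assume xV: "x \<in> V"
      show "induces_path E (component E x)"
      proof (cases "E\<^sup>*\<^sup>* x v")
        case False
        then have xv: "x \<noteq> v" by auto
        have ceq: "component E x = component E' x"
          unfolding component_def using away[OF _ False] E'E by blast
        have "x \<in> V'" using xV xv unfolding V'_def by blast
        then have "induces_path E' (component E' x)" using lf' unfolding linear_forest_def by blast
        moreover have "v \<notin> component E' x" unfolding component_def using noV xv by blast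
        ultimately show ?thesis using ipc ceq by simp
      next
        case True
        have cx: "component E x = component E v"
        proof -
          have vx: "E\<^sup>*\<^sup>* v x" using rtc_sym[OF s(1) True] by blast
          show ?thesis unfolding component_def using True vx by (auto intro: rtranclp_trans)
        qed
        show ?thesis
        proof (cases "\<exists>u. E v u")
          case False
          have "component E v = {v}"
          proof -
            have "y = v" if "E\<^sup>*\<^sup>* v y" for y
              using that False by (induction rule: rtranclp_induct) auto
            then show ?thesis unfolding component_def by auto
          qed
          moreover have "pathrep E [v]" unfolding pathrep_def using s(2) by auto
          ultimately show ?thesis unfolding cx ip_iff by (intro exI[of _ "[v]"]) auto
        next
          case True
          then obtain u where vu: "E v u" by blast
          have uV: "u \<in> V" using s(4) vu by blast
          have uniq: "w = u" if "E v w" for w using v(2) s(4) that vu uV by blast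
          have uv: "u \<noteq> v" using s(2) vu by blast
          have uV': "u \<in> V'" using uV uv unfolding V'_def by blast
          have cv: "component E v = insert v (component E' u)"
          proof
            have "y = v \<or> E'\<^sup>*\<^sup>* u y" if "E\<^sup>*\<^sup>* v y" for y
              using that
            proof (induction rule: rtranclp_induct)
              case base then show ?case by simp
            next
              case (step y z)
              show ?case
              proof (cases "z = v")
                case True then show ?thesis by simp
              next
                case False
                show ?thesis
                proof (cases "y = v")
                  case True
                  then have "z = u" using uniq step.hyps(2) by blast
                  then show ?thesis by simp
                next
                  case yv: False
                  then have "E'\<^sup>*\<^sup>* u y" using step.IH by blast
                  moreover have "E' y z" using step.hyps(2) yv False unfolding E'_def by simp
                  ultimately show ?thesis by (meson rtranclp.rtrancl_into_rtrancl)
                qed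
              qed
            qed
            then show "component E v \<subseteq> insert v (component E' u)" unfolding component_def by blast
          next
            have "E\<^sup>*\<^sup>* v y" if "E'\<^sup>*\<^sup>* u y" for y
              using E'E[OF that] vu by (meson converse_rtranclp_into_rtranclp)
            then show "insert v (component E' u) \<subseteq> component E v" unfolding component_def by auto
          qed
          from lf' uV' obtain p where p: "distinct p" "set p = component E' u" "pathrep E' p"
            unfolding linear_forest_def ip_iff by blast
          have up: "u \<in> set p" using p(2) unfolding component_def by simp
          have unbr: "\<forall>a b. a \<in> set p \<longrightarrow> b \<in> set p \<longrightarrow> E' u a \<longrightarrow> E' u b \<longrightarrow> a = b"
          proof (intro allI impI)
            fix a b assume "a \<in> set p" "b \<in> set p" "E' u a" "E' u b"
            then have "E u a" "E u b" "a \<noteq> v" "b \<noteq> v" unfolding E'_def by auto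
            moreover have "E u v" using s(1) vu by blast
            ultimately show "a = b" using less.prems(2) unfolding deg2_def by blast
          qed
          obtain q where q: "distinct q" "set q = set p" "pathrep E' q" "q ! 0 = u"
            using endpoint[OF p(1) p(3) up unbr] by blast
          have vq: "v \<notin> set q" using q(2) p(2) noV[OF _ uv] unfolding component_def by blast
          have pE: "pathrep E q" using q(3) pathrep_cong[of q E E'] vq unfolding E'_def by auto
          have ql: "0 < length q" using q(2) up by (cases q) auto
          have vj: "E v (q!j) \<longleftrightarrow> j = 0" if "j < length q" for j
          proof
            assume "E v (q!j)"
            then have "q!j = q!0" using uniq q(4) by simp
            then show "j = 0" using q(1) that ql by (simp add: nth_eq_iff_index_eq)
          next
            assume "j = 0" then show "E v (q!j)" using q(4) vu by simp
          qed
          have jv: "E (q!j) v \<longleftrightarrow> j = 0" if "j < length q" for j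
            using vj[OF that] s(1) by blast
          have "pathrep E (v # q)" by (rule pathrep_cons[OF pE s(2) vj jv])
          moreover have "distinct (v # q)" using q(1) vq by simp
          moreover have "set (v # q) = component E x" using cx cv q(2) p(2) by simp
          ultimately show ?thesis unfolding ip_iff by blast
        qed
      qed
    qed
  qed
qed

definition zz :: "nat \<Rightarrow> nat \<Rightarrow> nat" where
  "zz n i = (if even i then i div 2 else n - 1 - i div 2)"

lemma zz_lt: "i < n \<Longrightarrow> zz n i < n" unfolding zz_def by auto

lemma zz_inj: assumes "i < n" "j < n" "zz n i = zz n j" shows "i = j"
proof (cases "even i")
  case True
  then obtain a where a: "i = 2*a" by (auto elim: evenE)
  show ?thesis
  proof (cases "even j")
    case True
    then obtain b where "j = 2*b" by (auto elim: evenE)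
    then show ?thesis using a assms unfolding zz_def by simp
  next
    case False
    then obtain b where "j = 2*b+1" by (auto elim: oddE)
    then show ?thesis using a assms unfolding zz_def by simp
  qed
next
  case False
  then obtain a where a: "i = 2*a+1" by (auto elim: oddE)
  show ?thesis
  proof (cases "even j")
    case True
    then obtain b where "j = 2*b" by (auto elim: evenE)
    then show ?thesis using a assms unfolding zz_def by simp
  next
    case False
    then obtain b where "j = 2*b+1" by (auto elim: oddE)
    then show ?thesis using a assms unfolding zz_def by simp
  qed
qed

lemma zz_bij: "bij_betw (zz n) {0..<n} {0..<n}"
proof -
  have inj: "inj_on (zz n) {0..<n}" unfolding inj_on_def using zz_inj by auto
  have sub: "zz n ` {0..<n} \<subseteq> {0..<n}" using zz_lt by auto
  have "card (zz n ` {0..<n}) = card {0..<n}" using card_image[OF inj] by simp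
  then have "zz n ` {0..<n} = {0..<n}" using card_subset_eq[OF _ sub] by simp
  then show ?thesis using inj unfolding bij_betw_def by simp
qed

lemma g1: "(A::nat) < B \<Longrightarrow> B < Cc \<Longrightarrow> Cc < D \<Longrightarrow> btw3 D A B \<longleftrightarrow> \<not> btw3 D Cc B"
  unfolding btw3_def by auto
lemma g2: "(A::nat) < B \<Longrightarrow> B < Cc \<Longrightarrow> Cc < D \<Longrightarrow> btw3 A D Cc \<longleftrightarrow> \<not> btw3 A B Cc"
  unfolding btw3_def by auto

lemma zz_good: assumes "i + 3 < n"
  shows "btw3 (zz n (i+1)) (zz n i) (zz n (i+2)) \<longleftrightarrow> \<not> btw3 (zz n (i+1)) (zz n (i+3)) (zz n (i+2))"
proof (cases "even i")
  case True
  then obtain a where a: "i = 2*a" by (auto elim: evenE)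
  have z: "zz n i = a" "zz n (i+1) = n - 1 - a" "zz n (i+2) = a + 1" "zz n (i+3) = n - 1 - (a+1)"
    unfolding zz_def a by simp_all
  have "a < a + 1" "a + 1 < n - 1 - (a+1)" "n - 1 - (a+1) < n - 1 - a" using assms a by linarith+
  then show ?thesis unfolding z by (rule g1)
next
  case False
  then obtain a where a: "i = 2*a+1" by (auto elim: oddE)
  have z: "zz n i = n - 1 - a" "zz n (i+1) = a + 1" "zz n (i+2) = n - 1 - (a+1)" "zz n (i+3) = a + 2"
    unfolding zz_def a by simp_all
  have "a + 1 < a + 2" "a + 2 < n - 1 - (a+1)" "n - 1 - (a+1) < n - 1 - a" using assms a by linarith+
  then show ?thesis unfolding z by (rule g2)
qed

lemma btw_flip: "x \<noteq> y \<Longrightarrow> y \<noteq> w \<Longrightarrow> x \<noteq> w \<Longrightarrow> btw3 x y w \<longleftrightarrow> \<not> btw3 w y x"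
  unfolding btw3_def by auto

lemma btw_shift: "btw3 (K + x) (K + y) (K + w) = btw3 x y w"
  unfolding btw3_def by simp

lemma comp_in: "x \<in> component E x" unfolding component_def by simp
lemma comp_step: "a \<in> component E x \<Longrightarrow> E a b \<Longrightarrow> b \<in> component E x"
  unfolding component_def by (auto intro: rtranclp.rtrancl_into_rtrancl)

lemma lf_path:
  assumes "simple_graph V E" "linear_forest V E" "E a b"
  shows "\<exists>p. distinct p \<and> set p = component E a \<and> pathrep E p"
proof -
  have "a \<in> V" using sg_facts(3)[OF assms(1) assms(3)] .
  then show ?thesis using assms(2) unfolding linear_forest_def ip_iff by blast
qed

lemma idx_of: "y \<in> set p \<Longrightarrow> \<exists>i<length p. p!i = y" by (auto simp: in_set_conv_nth)

lemma lf_facts: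
  assumes sg: "simple_graph V E" and lf: "linear_forest V E"
  shows "noTri E \<and> deg2 E \<and> noC4 E"
proof -
  note s = sg_facts[OF sg]
  have T: "noTri E" unfolding noTri_def
  proof (intro allI impI)
    fix a b c assume ab: "E a b" and bc: "E b c" and ca: "E c a"
    obtain p where p: "distinct p" "set p = component E a" "pathrep E p" using lf_path[OF sg lf ab] by blast
    note pr = p(3)[unfolded pathrep_def, rule_format]
    have "a \<in> set p" "b \<in> set p" "c \<in> set p"
      using comp_in[of _ E] comp_step[OF comp_in[of a E] ab] comp_step[OF comp_step[OF comp_in[of a E] ab] bc] by (simp_all add: p(2))
    obtain i where "i < length p" "p!i = a" using idx_of[OF \<open>a \<in> set p\<close>] by blast
    obtain j where "j < length p" "p!j = b" using idx_of[OF \<open>b \<in> set p\<close>] by blast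
    obtain k where "k < length p" "p!k = c" using idx_of[OF \<open>c \<in> set p\<close>] by blast
    note ijk = \<open>i < length p\<close> \<open>j < length p\<close> \<open>k < length p\<close> \<open>p!i = a\<close> \<open>p!j = b\<close> \<open>p!k = c\<close>
    have "j = Suc i \<or> i = Suc j" using pr[of i j] ijk ab by simp
    moreover have "k = Suc j \<or> j = Suc k" using pr[of j k] ijk bc by simp
    moreover have "i = Suc k \<or> k = Suc i" using pr[of k i] ijk ca by simp
    ultimately show False by arith
  qed
  have D: "deg2 E" unfolding deg2_def
  proof (intro allI impI)
    fix x a b c assume xa: "E x a" and xb: "E x b" and xc: "E x c"
    obtain p where p: "distinct p" "set p = component E x" "pathrep E p" using lf_path[OF sg lf xa] by blast
    note pr = p(3)[unfolded pathrep_def, rule_format]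
    have "x \<in> set p" "a \<in> set p" "b \<in> set p" "c \<in> set p"
      using comp_in[of _ E] comp_step[OF comp_in[of x E] xa] comp_step[OF comp_in[of x E] xb] comp_step[OF comp_in[of x E] xc] by (simp_all add: p(2))
    obtain h where "h < length p" "p!h = x" using idx_of[OF \<open>x \<in> set p\<close>] by blast
    obtain i where "i < length p" "p!i = a" using idx_of[OF \<open>a \<in> set p\<close>] by blast
    obtain j where "j < length p" "p!j = b" using idx_of[OF \<open>b \<in> set p\<close>] by blast
    obtain k where "k < length p" "p!k = c" using idx_of[OF \<open>c \<in> set p\<close>] by blast
    note hijk = \<open>h < length p\<close> \<open>i < length p\<close> \<open>j < length p\<close> \<open>k < length p\<close> \<open>p!h = x\<close> \<open>p!i = a\<close> \<open>p!j = b\<close> \<open>p!k = c\<close>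
    have "i = Suc h \<or> h = Suc i" using pr[of h i] hijk xa by simp
    moreover have "j = Suc h \<or> h = Suc j" using pr[of h j] hijk xb by simp
    moreover have "k = Suc h \<or> h = Suc k" using pr[of h k] hijk xc by simp
    ultimately have "i = j \<or> i = k \<or> j = k" by arith
    then show "a = b \<or> a = c \<or> b = c" using hijk by auto
  qed
  have C: "noC4 E" unfolding noC4_def
  proof (intro allI impI)
    fix a b c d assume ab: "E a b" and bc: "E b c" and cd: "E c d" and da: "E d a" and ne: "a \<noteq> c" "b \<noteq> d"
    obtain p where p: "distinct p" "set p = component E a" "pathrep E p" using lf_path[OF sg lf ab] by blast
    note pr = p(3)[unfolded pathrep_def, rule_format]
    have "a \<in> set p" "b \<in> set p" "c \<in> set p" "d \<in> set p"
      using comp_in[of _ E] comp_step[OF comp_in[of a E] ab] comp_step[OF comp_step[OF comp_in[of a E] ab] bc]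
        comp_step[OF comp_step[OF comp_step[OF comp_in[of a E] ab] bc] cd] by (simp_all add: p(2))
    obtain h where "h < length p" "p!h = a" using idx_of[OF \<open>a \<in> set p\<close>] by blast
    obtain i where "i < length p" "p!i = b" using idx_of[OF \<open>b \<in> set p\<close>] by blast
    obtain j where "j < length p" "p!j = c" using idx_of[OF \<open>c \<in> set p\<close>] by blast
    obtain k where "k < length p" "p!k = d" using idx_of[OF \<open>d \<in> set p\<close>] by blast
    note hijk = \<open>h < length p\<close> \<open>i < length p\<close> \<open>j < length p\<close> \<open>k < length p\<close> \<open>p!h = a\<close> \<open>p!i = b\<close> \<open>p!j = c\<close> \<open>p!k = d\<close>
    have "i = Suc h \<or> h = Suc i" using pr[of h i] hijk ab by simp
    moreover have "j = Suc i \<or> i = Suc j" using pr[of i j] hijk bc by simp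
    moreover have "k = Suc j \<or> j = Suc k" using pr[of j k] hijk cd by simp
    moreover have "h = Suc k \<or> k = Suc h" using pr[of k h] hijk da by simp
    moreover have "h \<noteq> j" "i \<noteq> k" using ne hijk by auto
    ultimately show False by arith
  qed
  show ?thesis using T D C by blast
qed

lemma comp_V: assumes "simple_graph V E" "x \<in> V" shows "component E x \<subseteq> V"
proof
  fix y assume "y \<in> component E x"
  then have "E\<^sup>*\<^sup>* x y" unfolding component_def by simp
  then show "y \<in> V" using assms
    by (induction rule: rtranclp_induct) (auto dest: sg_facts(4)[OF assms(1)])
qed

lemma comp_back: assumes "\<And>x y. E x y \<Longrightarrow> E y x" "b \<in> component E x" "E a b" shows "a \<in> component E x"
  using comp_step[OF assms(2) assms(1)[OF assms(3)]] .

lemma comp_out: assumes "\<And>x y. E x y \<Longrightarrow> E y x" "y \<notin> component E x" "E\<^sup>*\<^sup>* y w" shows "w \<notin> component E x"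
proof
  assume "w \<in> component E x"
  then have "E\<^sup>*\<^sup>* x w" unfolding component_def by simp
  moreover have "E\<^sup>*\<^sup>* w y" using rtc_sym[OF assms(1) assms(3)] .
  ultimately have "E\<^sup>*\<^sup>* x y" by (rule rtranclp_trans)
  then show False using assms(2) unfolding component_def by simp
qed

lemma order_exists:
  assumes "simple_graph V E" "linear_forest V E"
  shows "\<exists>pos. bij_betw pos V {0..<card V} \<and> p4good V E pos"
  using assms
proof (induction "card V" arbitrary: V E rule: less_induct)
  case less
  note s = sg_facts[OF less.prems(1)]
  show ?case
  proof (cases "V = {}")
    case True then show ?thesis by (auto simp: p4good_def bij_betw_def)
  next
    case False
    then obtain x where xV: "x \<in> V" by blast
    define C where "C = component E x"
    obtain p where p: "distinct p" "set p = C" "pathrep E p"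
      using less.prems(2) xV unfolding linear_forest_def C_def ip_iff by blast
    note pr = p(3)[unfolded pathrep_def, rule_format]
    have CV: "C \<subseteq> V" unfolding C_def by (rule comp_V[OF less.prems(1) xV])
    have xC: "x \<in> C" unfolding C_def by (rule comp_in)
    have cl1: "b \<in> C" if "a \<in> C" "E a b" for a b using that unfolding C_def by (rule comp_step)
    have cl2: "a \<in> C" if "b \<in> C" "E a b" for a b using comp_step[of b E x a] s(1)[of a b] that unfolding C_def by blast
    define V' where "V' = V - C"
    define E' where "E' = (\<lambda>a b. E a b \<and> a \<in> V' \<and> b \<in> V')"
    have f1: "finite V'" unfolding V'_def using s(5) by simp
    have f2: "\<forall>u w. E' u w \<longrightarrow> u \<in> V' \<and> w \<in> V'" unfolding E'_def by blast
    have f3: "\<forall>u w. E' u w \<longrightarrow> E' w u" unfolding E'_def using s(1) by blast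
    have f4: "\<forall>u. \<not> E' u u" unfolding E'_def using s(2) by blast
    have sg': "simple_graph V' E'" unfolding simple_graph_def using f1 f2 f3 f4 by blast
    have lf': "linear_forest V' E'" unfolding linear_forest_def
    proof
      fix y assume yV': "y \<in> V'"
      then have yV: "y \<in> V" and yC: "y \<notin> C" unfolding V'_def by auto
      have inV': "w \<in> V'" if "E\<^sup>*\<^sup>* y w" for w
      proof -
        have "w \<in> V" using comp_V[OF less.prems(1) yV] that unfolding component_def by blast
        moreover have "w \<notin> C" using comp_out[OF s(1) _ that] yC unfolding C_def by blast
        ultimately show ?thesis unfolding V'_def by blast
      qed
      have ceq: "component E' y = component E y"
      proof
        have "E\<^sup>*\<^sup>* y w" if "E'\<^sup>*\<^sup>* y w" for w
          using that by (induction rule: rtranclp_induct) (auto simp: E'_def intro: rtranclp.rtrancl_into_rtrancl)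
        then show "component E' y \<subseteq> component E y" unfolding component_def by blast
      next
        have "E'\<^sup>*\<^sup>* y w" if "E\<^sup>*\<^sup>* y w" for w
          using that
        proof (induction rule: rtranclp_induct)
          case base then show ?case by simp
        next
          case (step w z)
          have "E' w z" unfolding E'_def using step.hyps inV' by (meson rtranclp.rtrancl_into_rtrancl)
          then show ?case using step.IH by (meson rtranclp.rtrancl_into_rtrancl)
        qed
        then show "component E y \<subseteq> component E' y" unfolding component_def by blast
      qed
      obtain q where q: "distinct q" "set q = component E y" "pathrep E q"
        using less.prems(2) yV unfolding linear_forest_def ip_iff by blast
      have "pathrep E' q = pathrep E q"
        by (rule pathrep_cong) (use q(2) inV' in \<open>auto simp: E'_def component_def\<close>)
      then show "induces_path E' (component E' y)" unfolding ceq ip_iff using q by blast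
    qed
    have "V' \<subset> V" unfolding V'_def using xC xV by blast
    then have "card V' < card V" using s(5) by (rule psubset_card_mono[rotated])
    then obtain pos' where pos': "bij_betw pos' V' {0..<card V'}" "p4good V' E' pos'"
      using less.hyps sg' lf' by blast
    define n where "n = length p"
    define K where "K = card V'"
    define idx where "idx = inv_into {0..<n} ((!) p)"
    have bn: "bij_betw ((!) p) {0..<n} C" using bij_betw_nth[OF p(1) _ p(2)[symmetric]] unfolding n_def
      by (simp add: lessThan_atLeast0)
    have bidx: "bij_betw idx C {0..<n}" unfolding idx_def by (rule bij_betw_inv_into[OF bn])
    have idx_nth: "idx (p!i) = i" if "i < n" for i
      unfolding idx_def using bn that by (simp add: bij_betw_def)
    define pos where "pos = (\<lambda>y. if y \<in> C then K + zz n (idx y) else pos' y)"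
    have b1: "bij_betw pos V' {0..<K}"
      using pos'(1) unfolding K_def by (rule bij_betw_cong[THEN iffD1, rotated]) (auto simp: pos_def V'_def)
    have b2: "bij_betw pos C {K..<K+n}"
    proof -
      have "bij_betw (\<lambda>i. K + i) {0..<n} {K..<K+n}"
        by (rule bij_betw_imageI) (auto simp: inj_on_def image_add_atLeastLessThan add.commute)
      then have "bij_betw ((\<lambda>i. K + i) \<circ> (zz n \<circ> idx)) C {K..<K+n}"
        by (intro bij_betw_trans[OF bij_betw_trans[OF bidx zz_bij]])
      then show ?thesis by (rule bij_betw_cong[THEN iffD1, rotated]) (auto simp: pos_def)
    qed
    have cardV: "card V = K + n"
    proof -
      have "card C = n" unfolding n_def using p(1,2) distinct_card by metis
      moreover have "finite C" using CV s(5) finite_subset by blast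
      ultimately show ?thesis unfolding K_def V'_def using card_Diff_subset[of C V] CV card_mono[OF s(5) CV] by simp
    qed
    have bij: "bij_betw pos V {0..<card V}"
    proof -
      have "bij_betw pos (V' \<union> C) ({0..<K} \<union> {K..<K+n})" by (rule bij_betw_combine[OF b1 b2]) auto
      moreover have "V' \<union> C = V" unfolding V'_def using CV by blast
      moreover have "{0..<K} \<union> {K..<K+n} = {0..<card V}" unfolding cardV by auto
      ultimately show ?thesis by simp
    qed
    have good: "p4good V E pos" unfolding p4good_def
    proof (intro allI impI)
      fix a b c d assume V: "a\<in>V" "b\<in>V" "c\<in>V" "d\<in>V" and ab: "E a b" and bc: "E b c" and cd: "E c d"
        and ne: "a \<noteq> c" "b \<noteq> d" "a \<noteq> d" and n: "\<not> E a c" "\<not> E b d" "\<not> E a d"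
      show "btw3 (pos b) (pos a) (pos c) \<longleftrightarrow> \<not> btw3 (pos b) (pos d) (pos c)"
      proof (cases "a \<in> C")
        case True
        then have inC: "a \<in> C" "b \<in> C" "c \<in> C" "d \<in> C" using cl1 ab bc cd by blast+
        obtain h where h: "h < n" "p!h = a" using idx_of[of a p] inC p(2) unfolding n_def by blast
        obtain i where i: "i < n" "p!i = b" using idx_of[of b p] inC p(2) unfolding n_def by blast
        obtain j where j: "j < n" "p!j = c" using idx_of[of c p] inC p(2) unfolding n_def by blast
        obtain k where k: "k < n" "p!k = d" using idx_of[of d p] inC p(2) unfolding n_def by blast
        have "i = Suc h \<or> h = Suc i" using pr[of h i] h i ab unfolding n_def by simp
        moreover have "j = Suc i \<or> i = Suc j" using pr[of i j] i j bc unfolding n_def by simp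
        moreover have "k = Suc j \<or> j = Suc k" using pr[of j k] j k cd unfolding n_def by simp
        moreover have "h \<noteq> j" "i \<noteq> k" using ne h i j k by auto
        ultimately have cases: "(i = h+1 \<and> j = h+2 \<and> k = h+3) \<or> (j = k+1 \<and> i = k+2 \<and> h = k+3)" by arith
        have pa: "pos a = K + zz n h" "pos b = K + zz n i" "pos c = K + zz n j" "pos d = K + zz n k"
          unfolding pos_def using inC h i j k idx_nth by auto
        have zi: "zz n u \<noteq> zz n v" if "u < n" "v < n" "u \<noteq> v" for u v using zz_inj that by blast
        show ?thesis unfolding pa btw_shift
          using cases
        proof
          assume c1: "i = h+1 \<and> j = h+2 \<and> k = h+3"
          then show "btw3 (zz n i) (zz n h) (zz n j) \<longleftrightarrow> \<not> btw3 (zz n i) (zz n k) (zz n j)"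
            using zz_good[of h n] k by simp
        next
          assume c2: "j = k+1 \<and> i = k+2 \<and> h = k+3"
          have g: "btw3 (zz n j) (zz n k) (zz n i) \<longleftrightarrow> \<not> btw3 (zz n j) (zz n h) (zz n i)"
            using zz_good[of k n] c2 h by simp
          have f1: "btw3 (zz n i) (zz n h) (zz n j) \<longleftrightarrow> \<not> btw3 (zz n j) (zz n h) (zz n i)"
            by (rule btw_flip) (use zi h i j c2 in auto)
          have f2: "btw3 (zz n i) (zz n k) (zz n j) \<longleftrightarrow> \<not> btw3 (zz n j) (zz n k) (zz n i)"
            by (rule btw_flip) (use zi k i j c2 in auto)
          show "btw3 (zz n i) (zz n h) (zz n j) \<longleftrightarrow> \<not> btw3 (zz n i) (zz n k) (zz n j)"
            using g f1 f2 by blast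
        qed
      next
        case False
        then have nC: "a \<notin> C" "b \<notin> C" "c \<notin> C" "d \<notin> C" using cl2 ab bc cd by blast+
        then have V': "a \<in> V'" "b \<in> V'" "c \<in> V'" "d \<in> V'" using V unfolding V'_def by auto
        have "btw3 (pos' b) (pos' a) (pos' c) \<longleftrightarrow> \<not> btw3 (pos' b) (pos' d) (pos' c)"
          using pos'(2)[unfolded p4good_def, rule_format, of a b c d] V' ab bc cd ne n unfolding E'_def by blast
        moreover have "pos a = pos' a" "pos b = pos' b" "pos c = pos' c" "pos d = pos' d"
          unfolding pos_def using nC by auto
        ultimately show ?thesis by simp
      qed
    qed
    show ?thesis using bij good by blast
  qed
qed

theorem proposition5:
  fixes V :: "'a set" and E :: "'a \<Rightarrow> 'a \<Rightarrow> bool"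
  assumes "simple_graph V E"
  shows "linear_forest V E \<longleftrightarrow> (\<exists>pos. circ_ordering V pos \<and> LF_free V E pos)"
proof
  assume lf: "linear_forest V E"
  obtain pos where b: "bij_betw pos V {0..<card V}" and g: "p4good V E pos"
    using order_exists[OF assms lf] by blast
  have c: "noTri E \<and> deg2 E \<and> noC4 E" using lf_facts[OF assms lf] .
  have "LF_free V E pos" using conds_to_LF[OF assms] c g by blast
  then show "\<exists>pos. circ_ordering V pos \<and> LF_free V E pos" using b unfolding circ_ordering_def by blast
next
  assume "\<exists>pos. circ_ordering V pos \<and> LF_free V E pos"
  then obtain pos where b: "bij_betw pos V {0..<card V}" and l: "LF_free V E pos"
    unfolding circ_ordering_def by blast
  have c: "noTri E \<and> deg2 E \<and> noC4 E \<and> p4good V E pos"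
    using LF_to_conds[OF assms bij_betw_imp_inj_on[OF b] l] .
  have d: "\<forall>S. S \<subseteq> V \<longrightarrow> S \<noteq> {} \<longrightarrow> (\<exists>v\<in>S. \<forall>a b. a \<in> S \<longrightarrow> b \<in> S \<longrightarrow> E v a \<longrightarrow> E v b \<longrightarrow> a = b)"
    using degen[OF assms] c by blast
  show "linear_forest V E" using lf_induct[OF assms _ d] c by blast
qed

end
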